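(* For integers $1\le k\le n$, let $h_{k|n}(p)=\sum_{i=k}^{n}\binom{n}{i}p^i(1-p)^{n-i}$, $p\in[0,1]$, be the reliability function of a $k$-out-of-$n$ system with i.i.d. components each of reliability $p$, and let $R_{k|n}(p)=(1-p)\,h_{k|n}'(p)/(1-h_{k|n}(p))$ for $p\in(0,1)$. Then: (ii) for integers $1\le k\le n$ and $1\le l\le m$ with $l\le k$ and $n-k\le m-l$, the ratio $R_{k|n}(p)/R_{l|m}(p)$ is increasing in $p\in(0,1)$; (iii) for $1\le k\le n$, the function $p\,R_{k|n}'(p)/R_{k|n}(p)$ is decreasing in $p\in(0,1)$.
   Context: "Increasing" means non-decreasing and "decreasing" means non-increasing. A $k$-out-of-$n$ system functions as long as at least $k$ of its $n$ components function. (Part (i) of this lemma in the paper, that $R_{k|n}$ is increasing, is a cited result and is not included.) *)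

theory Defs
  imports "HOL-Analysis.Analysis"
begin

definition hkn :: "nat \<Rightarrow> nat \<Rightarrow> real \<Rightarrow> real" where
  "hkn k n p = (\<Sum>i=k..n. real (n choose i) * p ^ i * (1 - p) ^ (n - i))"

definition Rkn :: "nat \<Rightarrow> nat \<Rightarrow> real \<Rightarrow> real" where
  "Rkn k n p = (1 - p) * deriv (hkn k n) p / (1 - hkn k n p)"

end

theory Submission
  imports Defs
begin

definition FF :: "nat \<Rightarrow> nat \<Rightarrow> real \<Rightarrow> real" where
  "FF K n p = (\<Sum>i<K. real (n choose i) * p^i * (1-p)^(n-i))"
definition GG :: "nat \<Rightarrow> nat \<Rightarrow> real \<Rightarrow> real" where
  "GG N k p = (\<Sum>j<k. real (N+j choose j) * p^j)"

lemma FF_rec1: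
  assumes "K \<le> n"
  shows "FF (Suc K) (Suc n) p = (1-p) * FF (Suc K) n p + p * FF K n p"
proof -
  have "FF (Suc K) (Suc n) p = (1-p)^(Suc n) + (\<Sum>i<K. real (Suc n choose Suc i) * p^(Suc i) * (1-p)^(n-i))"
    unfolding FF_def by (subst sum.lessThan_Suc_shift) simp
  also have "\<dots> = (1-p)^(Suc n) + (\<Sum>i<K. real (n choose Suc i) * p^(Suc i) * (1-p)^(n-i))
      + (\<Sum>i<K. real (n choose i) * p^(Suc i) * (1-p)^(n-i))"
    by (simp add: sum.distrib[symmetric] algebra_simps)
  also have "(\<Sum>i<K. real (n choose Suc i) * p^(Suc i) * (1-p)^(n-i))
      = (1-p) * (\<Sum>i<K. real (n choose Suc i) * p^(Suc i) * (1-p)^(n - Suc i))"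
    unfolding sum_distrib_left
  proof (rule sum.cong[OF refl])
    fix i assume "i \<in> {..<K}"
    then have "n - i = Suc (n - Suc i)" using assms by auto
    then show "real (n choose Suc i) * p ^ Suc i * (1 - p) ^ (n - i) =
          (1 - p) * (real (n choose Suc i) * p ^ Suc i * (1 - p) ^ (n - Suc i))" by simp
  qed
  also have "(\<Sum>i<K. real (n choose i) * p^(Suc i) * (1-p)^(n-i)) = p * FF K n p"
    unfolding FF_def sum_distrib_left by (simp add: mult_ac)
  finally have X: "FF (Suc K) (Suc n) p = (1 - p) ^ Suc n + (1 - p) * (\<Sum>i<K. real (n choose Suc i) * p ^ Suc i * (1 - p) ^ (n - Suc i)) + p * FF K n p" .
  have "(1-p) * FF (Suc K) n p = (1-p) * ((1-p)^n + (\<Sum>i<K. real (n choose Suc i) * p^(Suc i) * (1-p)^(n - Suc i)))"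
    unfolding FF_def by (subst sum.lessThan_Suc_shift) simp
  then show ?thesis using X by (simp add: algebra_simps)
qed

lemma FF_rec:
  assumes "K \<le> n"
  shows "FF (Suc K) (Suc n) p = FF K n p + real (n choose K) * p^K * (1-p)^(Suc (n - K))"
proof -
  have "FF (Suc K) n p = FF K n p + real (n choose K) * p^K * (1-p)^(n - K)"
    unfolding FF_def by simp
  then show ?thesis using FF_rec1[OF assms, of p] by (simp add: algebra_simps)
qed

lemma FF_GG: "FF k (N+k) p = (1-p)^(Suc N) * GG N k p"
proof (induction k)
  case 0
  then show ?case by (simp add: FF_def GG_def)
next
  case (Suc k)
  have "FF (Suc k) (N + Suc k) p = FF (Suc k) (Suc (N+k)) p" by simp
  also have "\<dots> = FF k (N+k) p + real (N+k choose k) * p^k * (1-p)^(Suc N)"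
    by (subst FF_rec) auto
  also have "\<dots> = (1-p)^(Suc N) * GG N (Suc k) p"
    using Suc by (simp add: GG_def algebra_simps)
  finally show ?case .
qed

lemma one_minus_hkn:
  assumes "k \<le> n"
  shows "1 - hkn k n p = FF k n p"
proof -
  have "1 = (p + (1-p))^n" by simp
  also have "\<dots> = (\<Sum>i\<in>{..<k} \<union> {k..n}. real (n choose i) * p^i * (1-p)^(n-i))"
  proof -
    have "{..<k} \<union> {k..n} = {0..n}" using assms by auto
    then show ?thesis using binomial_ring[of p "1-p" n] by (simp add: atLeast0AtMost)
  qed
  also have "\<dots> = FF k n p + hkn k n p"
    unfolding FF_def hkn_def by (subst sum.union_disjoint) auto
  finally show ?thesis by simp
qed

lemma GG_pos: assumes "0 < k" "0 \<le> p" shows "GG N k p \<ge> 1"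
proof -
  obtain k' where k: "k = Suc k'" using assms by (cases k) auto
  have "GG N k p = (\<Sum>j<k'. real (N + Suc j choose Suc j) * p^Suc j) + 1"
    unfolding GG_def k by (subst sum.lessThan_Suc_shift) simp
  moreover have "(\<Sum>j<k'. real (N + Suc j choose Suc j) * p^Suc j) \<ge> 0"
    using assms by (intro sum_nonneg) auto
  ultimately show ?thesis by simp
qed



lemma kpow: "real k * p^(k-1) * p = real k * p^k"
  by (cases k) auto

lemma kpow': "real k * p^(k - Suc 0) * p = real k * p^k"
  by (cases k) auto

lemma GG_Suc: "GG N (Suc k) p = GG N k p + real (N+k choose k) * p^k"
  by (simp add: GG_def)

lemma deriv_qG:
  "((\<lambda>p. (1-p)^(Suc N) * GG N k p) has_real_derivative
      (-(real k * real (N+k choose k)) * p^(k-1) * (1-p)^N)) (at p)"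
proof (induction k)
  case 0
  then show ?case by (simp add: GG_def)
next
  case (Suc k)
  define c where "c = real (N+k choose k)"
  have c2: "real (Suc k) * real (N + Suc k choose Suc k) = real (Suc (N+k)) * c"
    unfolding c_def using Suc_times_binomial[of k "N+k"] by (metis add_Suc_right of_nat_mult)
  have d2: "((\<lambda>p. c * ((1-p)^(Suc N) * p^k)) has_real_derivative
       c * ((- (real (Suc N) * (1-p)^N)) * p^k + (1-p)^(Suc N) * (real k * p^(k-1)))) (at p)"
  proof -
    have dq: "((\<lambda>p. (1-p)^(Suc N)) has_real_derivative (- (real (Suc N) * (1-p)^N))) (at p)"
    proof -
      have d1: "((\<lambda>p. 1 - p) has_real_derivative -1) (at p)" by (auto intro!: derivative_eq_intros)
      show ?thesis by (rule DERIV_cong[OF DERIV_power[OF d1, where n="Suc N"]]) simp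
    qed
    have dp: "((\<lambda>p. p^k) has_real_derivative (real k * p^(k-1))) (at p)"
      using DERIV_pow[of k p UNIV] by simp
    show ?thesis by (rule DERIV_cong[OF DERIV_cmult[OF DERIV_mult[OF dq dp]]]) (simp add: algebra_simps)
  qed
  have "((\<lambda>p. (1-p)^(Suc N) * GG N k p + c * ((1-p)^(Suc N) * p^k)) has_real_derivative
      (-(real k * c) * p^(k-1) * (1-p)^N) +
       c * ((- (real (Suc N) * (1-p)^N)) * p^k + (1-p)^(Suc N) * (real k * p^(k-1)))) (at p)"
    using DERIV_add[OF Suc d2] unfolding c_def by simp
  moreover have "(\<lambda>p. (1-p)^(Suc N) * GG N k p + c * ((1-p)^(Suc N) * p^k)) =
      (\<lambda>p. (1-p)^(Suc N) * GG N (Suc k) p)"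
    by (rule ext) (simp add: GG_Suc c_def algebra_simps)
  moreover have "(-(real k * c) * p^(k-1) * (1-p)^N) +
       c * ((- (real (Suc N) * (1-p)^N)) * p^k + (1-p)^(Suc N) * (real k * p^(k-1)))
      = -(real (Suc k) * real (N + Suc k choose Suc k)) * p^(Suc k - 1) * (1-p)^N"
  proof -
    have "(1-p)^(Suc N) * (real k * p^(k-1)) = (1-p)^N * (real k * p^(k-1)) - (1-p)^N * (real k * p^k)"
      using kpow[of k p] by (cases k) (simp_all add: algebra_simps)
    then show ?thesis unfolding c2 by (simp add: algebra_simps)
  qed
  ultimately show ?case by simp
qed

lemma hkn_eq:
  assumes "k \<le> n"
  shows "hkn k n p = 1 - (1-p)^(Suc (n-k)) * GG (n-k) k p"
  using one_minus_hkn[OF assms, of p] FF_GG[of k "n-k" p] assms by simp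

lemma deriv_hkn:
  assumes "k \<le> n"
  shows "deriv (hkn k n) p = real k * real (n choose k) * p^(k-1) * (1-p)^(n-k)"
proof -
  have e: "hkn k n = (\<lambda>p. 1 - (1-p)^(Suc (n-k)) * GG (n-k) k p)"
    using hkn_eq[OF assms] by auto
  have "(hkn k n has_real_derivative (- (-(real k * real (n-k+k choose k)) * p^(k-1) * (1-p)^(n-k)))) (at p)"
    unfolding e using DERIV_diff[OF DERIV_const deriv_qG] by simp
  then show ?thesis using assms by (auto intro!: DERIV_imp_deriv)
qed

lemma Rkn_eq:
  assumes "1 \<le> k" "k \<le> n" "0 < p" "p < 1"
  shows "Rkn k n p = real k * real (n choose k) * p^(k-1) / GG (n-k) k p"
proof -
  have G: "GG (n-k) k p \<ge> 1" using GG_pos assms by auto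
  have "Rkn k n p = (1-p) * (real k * real (n choose k) * p^(k-1) * (1-p)^(n-k)) / ((1-p)^(Suc (n-k)) * GG (n-k) k p)"
    unfolding Rkn_def deriv_hkn[OF assms(2)] using hkn_eq[OF assms(2), of p] by simp
  also have "\<dots> = real k * real (n choose k) * p^(k-1) / GG (n-k) k p"
    using assms G by (simp add: field_simps)
  finally show ?thesis .
qed

lemma tp2:
  fixes a b :: "nat \<Rightarrow> real"
  assumes ab: "\<And>i j. i < K \<Longrightarrow> j < K \<Longrightarrow> j < i \<Longrightarrow> a j * b i \<le> a i * b j"
    and p: "0 \<le> p" and pq: "p \<le> q"
  shows "(\<Sum>i<K. a i * p^i) * (\<Sum>j<K. b j * q^j) \<le> (\<Sum>i<K. a i * q^i) * (\<Sum>j<K. b j * p^j)"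
proof -
  have pw: "p^i * q^j \<le> q^i * p^j" if "j \<le> i" for i j :: nat
  proof -
    have "p^i * q^j = p^j * q^j * p^(i-j)" using that by (simp add: power_add[symmetric] mult_ac)
    also have "\<dots> \<le> p^j * q^j * q^(i-j)"
      by (rule mult_left_mono) (use p pq in \<open>auto intro: power_mono\<close>)
    also have "\<dots> = q^i * p^j" using that by (simp add: power_add[symmetric] mult_ac)
    finally show ?thesis .
  qed
  define D where "D = (\<Sum>i<K. \<Sum>j<K. a i * b j * (p^i * q^j - q^i * p^j))"
  have D1: "D = (\<Sum>i<K. a i * p^i) * (\<Sum>j<K. b j * q^j) - (\<Sum>i<K. a i * q^i) * (\<Sum>j<K. b j * p^j)"
    unfolding D_def sum_product
    by (simp add: sum_subtractf[symmetric] algebra_simps)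
  have D2: "D = (\<Sum>i<K. \<Sum>j<K. a j * b i * (p^j * q^i - q^j * p^i))"
    unfolding D_def by (rule sum.swap)
  have "2 * D = (\<Sum>i<K. \<Sum>j<K. (a i * b j - a j * b i) * (p^i * q^j - q^i * p^j))"
    by (subst mult_2, subst D1[folded D1], subst (2) D2, unfold D_def)
       (simp add: sum.distrib[symmetric] algebra_simps)
  also have "\<dots> \<le> 0"
  proof (intro sum_nonpos)
    fix i j assume i: "i \<in> {..<K}" and j: "j \<in> {..<K}"
    show "(a i * b j - a j * b i) * (p^i * q^j - q^i * p^j) \<le> 0"
    proof (cases "j < i")
      case True
      then show ?thesis using ab[of i j] i j pw[of j i]
        by (intro mult_nonneg_nonpos) auto
    next
      case False
      show ?thesis
      proof (cases "i < j")
        case True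
        then show ?thesis using ab[of j i] i j pw[of i j]
          by (intro mult_nonpos_nonneg) (auto simp: mult_ac)
      next
        case False
        with \<open>\<not> j < i\<close> have "i = j" by auto
        then show ?thesis by simp
      qed
    qed
  qed
  finally show ?thesis using D1 by simp
qed


lemma shiftsum:
  "(\<Sum>i<d+l. (if d \<le> i then f (i-d) else 0) * (p::real)^i) = p^d * (\<Sum>r<l. f r * p^r)"
proof (induction l)
  case 0
  then show ?case by simp
next
  case (Suc l)
  then show ?case by (simp add: algebra_simps power_add)
qed

lemma tp_binom:
  assumes "N \<le> M"
  shows "real (M + r choose r) * real (N + (r + d + t) choose (r + d + t))
       \<le> real (M + (r+t) choose (r+t)) * real (N + (r+d) choose (r+d))"
proof (induction t)
  case 0
  then show ?case by simp
next
  case (Suc t)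
  define s where "s = r + t"
  define i where "i = r + d + t"
  define x where "x = real (M + r choose r)"
  define y where "y = real (N + (r+d) choose (r+d))"
  define A where "A = real (M + s choose s)"
  define A' where "A' = real (M + Suc s choose Suc s)"
  define B where "B = real (N + i choose i)"
  define B' where "B' = real (N + Suc i choose Suc i)"
  have eA: "real (Suc s) * A' = real (M + Suc s) * A"
    unfolding A_def A'_def using Suc_times_binomial[of s "M+s"] by (metis add_Suc_right of_nat_mult)
  have eB: "real (Suc i) * B' = real (N + Suc i) * B"
    unfolding B_def B'_def using Suc_times_binomial[of i "N+i"] by (metis add_Suc_right of_nat_mult)
  have IH: "x * B \<le> A * y" using Suc unfolding x_def B_def A_def y_def s_def i_def by simp
  have x0: "x \<ge> 0" "y \<ge> 0" "A \<ge> 0" unfolding x_def y_def A_def by auto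
  have nat_ineq: "(Suc s) * (N + Suc i) \<le> (Suc i) * (M + Suc s)"
  proof -
    have i: "i = s + d" unfolding i_def s_def by simp
    have "(Suc s) * (N + Suc i) = (Suc s) * (N + Suc s) + d * Suc s" unfolding i by (simp add: algebra_simps)
    also have "\<dots> \<le> (Suc s) * (N + Suc s) + d * (N + Suc s)" by simp
    also have "\<dots> = Suc i * (N + Suc s)" unfolding i by (simp add: algebra_simps)
    also have "\<dots> \<le> Suc i * (M + Suc s)" using assms by (intro mult_le_mono) auto
    finally show ?thesis .
  qed
  have "real (Suc s) * real (Suc i) * (x * B') = real (Suc s) * (x * (real (N + Suc i) * B))"
  proof -
    have "real (Suc s) * real (Suc i) * (x * B') = real (Suc s) * x * (real (Suc i) * B')" by (simp only: mult_ac)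
    also have "\<dots> = real (Suc s) * (x * (real (N + Suc i) * B))" unfolding eB by (simp only: mult_ac)
    finally show ?thesis .
  qed
  also have "\<dots> \<le> real (Suc s) * (real (N + Suc i) * (A * y))"
  proof -
    have "x * (real (N + Suc i) * B) = real (N + Suc i) * (x * B)" by (simp only: mult_ac)
    also have "\<dots> \<le> real (N + Suc i) * (A * y)" using IH by (rule mult_left_mono) simp
    finally show ?thesis by (rule mult_left_mono) simp
  qed
  also have "\<dots> = real (Suc s * (N + Suc i)) * (A * y)" by (simp only: of_nat_mult mult.assoc)
  also have "\<dots> \<le> real (Suc i * (M + Suc s)) * (A * y)"
    by (rule mult_right_mono) (use nat_ineq x0 in \<open>simp_all only: of_nat_le_iff\<close>, simp)
  also have "\<dots> = real (Suc s) * real (Suc i) * (A' * y)"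
  proof -
    have "real (Suc i * (M + Suc s)) * (A * y) = real (Suc i) * y * (real (M + Suc s) * A)" by (simp only: of_nat_mult mult_ac)
    also have "\<dots> = real (Suc s) * real (Suc i) * (A' * y)" unfolding eA[symmetric] by (simp only: mult_ac)
    finally show ?thesis .
  qed
  finally have "x * B' \<le> A' * y" by simp
  then show ?case unfolding x_def B'_def A'_def y_def s_def i_def by simp
qed

lemma part2:
  assumes "1 \<le> k" "k \<le> n" "1 \<le> l" "l \<le> m" "l \<le> k" "n - k \<le> m - l"
  shows "mono_on {0<..<1::real} (\<lambda>p. Rkn k n p / Rkn l m p)"
proof (rule monotone_onI)
  fix p q :: real assume p: "p \<in> {0<..<1}" and q: "q \<in> {0<..<1}" and pq: "p \<le> q"
  define N where "N = n - k"
  define M where "M = m - l"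
  define d where "d = k - l"
  have kd: "k = d + l" unfolding d_def using assms by simp
  define C where "C = (real k * real (n choose k)) / (real l * real (m choose l))"
  have C0: "C \<ge> 0" unfolding C_def by simp
  define a where "a i = (if d \<le> i then real (M + (i-d) choose (i-d)) else 0)" for i
  define b where "b i = real (N + i choose i)" for i
  have A: "p^d * GG M l p = (\<Sum>i<k. a i * p^i)" for p :: real
    unfolding kd a_def GG_def by (subst shiftsum) simp
  have B: "GG N k p = (\<Sum>i<k. b i * p^i)" for p :: real
    unfolding b_def GG_def by simp
  have f: "Rkn k n x / Rkn l m x = C * (x^d * GG M l x / GG N k x)" if x: "x \<in> {0<..<1}" for x
  proof -
    have G1: "GG N k x \<ge> 1" "GG M l x \<ge> 1" using GG_pos x assms by auto
    have pw: "x^(k-1) = x^d * x^(l-1)" using assms unfolding d_def by (simp add: power_add[symmetric])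
    have "Rkn k n x / Rkn l m x = (real k * real (n choose k) * x^(k-1) / GG N k x) /
        (real l * real (m choose l) * x^(l-1) / GG M l x)"
      using Rkn_eq[of k n x] Rkn_eq[of l m x] assms x unfolding N_def M_def by simp
    also have "\<dots> = C * (x^d * GG M l x / GG N k x)"
      unfolding C_def pw using G1 x assms by (simp add: field_simps)
    finally show ?thesis .
  qed
  have ab: "a j * b i \<le> a i * b j" if "i < k" "j < k" "j < i" for i j
  proof (cases "d \<le> j")
    case False
    then show ?thesis unfolding a_def b_def by simp
  next
    case True
    obtain r where r: "j = r + d" using True by (metis le_add_diff_inverse2)
    obtain t where t: "i = r + d + t" using \<open>j < i\<close> r by (metis less_imp_add_positive)
    show ?thesis
      using tp_binom[of N M r d t] assms unfolding a_def b_def r t N_def M_def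
      by (simp add: mult_ac add_ac)
  qed
  have "(\<Sum>i<k. a i * p^i) * (\<Sum>j<k. b j * q^j) \<le> (\<Sum>i<k. a i * q^i) * (\<Sum>j<k. b j * p^j)"
    by (rule tp2[OF ab]) (use p pq in auto)
  then have "p^d * GG M l p * GG N k q \<le> q^d * GG M l q * GG N k p"
    unfolding A B by simp
  moreover have "GG N k p \<ge> 1" "GG N k q \<ge> 1" using GG_pos p q assms by auto
  ultimately have "p^d * GG M l p / GG N k p \<le> q^d * GG M l q / GG N k q"
    by (simp add: divide_simps)
  then show "Rkn k n p / Rkn l m p \<le> Rkn k n q / Rkn l m q"
    unfolding f[OF p] f[OF q] using C0 by (rule mult_left_mono)
qed


definition HH :: "nat \<Rightarrow> nat \<Rightarrow> real \<Rightarrow> real" where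
  "HH N k p = (\<Sum>j<k. real j * real (N+j choose j) * p^j)"

lemma GG_deriv:
  "(GG N k has_real_derivative (\<Sum>j<k. real (N+j choose j) * (real j * p^(j - Suc 0)))) (at p)"
proof -
  have "((\<lambda>p. \<Sum>j<k. real (N+j choose j) * p^j) has_real_derivative
      (\<Sum>j<k. real (N+j choose j) * (real j * p^(j - Suc 0)))) (at p)"
    by (intro DERIV_sum DERIV_cmult DERIV_pow)
  then show ?thesis unfolding GG_def[abs_def] .
qed

lemma pG'_eq: "p * (\<Sum>j<k. real (N+j choose j) * (real j * p^(j - Suc 0))) = HH N k p"
  unfolding HH_def sum_distrib_left
proof (rule sum.cong[OF refl])
  fix j
  show "p * (real (N + j choose j) * (real j * p ^ (j - Suc 0))) = real j * real (N + j choose j) * p ^ j"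
    using kpow'[of j p] by (simp add: mult_ac)
qed

lemma alg3: "G \<noteq> 0 \<Longrightarrow> F \<noteq> 0 \<Longrightarrow>
  (p::real) * ((X * G - F * Y) / (G * G)) / (F / G) = (p * X * G - F * (p * Y)) / (F * G)"
  by (simp add: field_simps)

lemma alg4: "G \<noteq> 0 \<Longrightarrow> c \<noteq> 0 \<Longrightarrow> P \<noteq> 0 \<Longrightarrow>
  (c * (X * P) * G - c * P * H) / (c * P * (G::real)) = X - H / G"
  by (simp add: field_simps)

lemma part3_formula:
  assumes "1 \<le> k" "k \<le> n" "0 < p" "p < 1"
  shows "p * deriv (Rkn k n) p / Rkn k n p = real (k-1) - HH (n-k) k p / GG (n-k) k p"
proof -
  define N where "N = n - k"
  define c where "c = real k * real (n choose k)"
  have c0: "c > 0" unfolding c_def using assms by simp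
  define G' where "G' = (\<Sum>j<k. real (N+j choose j) * (real j * p^(j - Suc 0)))"
  have G1: "GG N k p \<ge> 1" using GG_pos assms by auto
  have dF: "((\<lambda>x. c * x^(k-1)) has_real_derivative c * (real (k-1) * p^(k - 1 - Suc 0))) (at p)"
    by (intro DERIV_cmult DERIV_pow)
  have dR0: "((\<lambda>x. c * x^(k-1) / GG N k x) has_real_derivative
     ((c * (real (k-1) * p^(k - 1 - Suc 0))) * GG N k p - c * p^(k-1) * G') / (GG N k p * GG N k p)) (at p)"
    unfolding G'_def by (rule DERIV_divide[OF dF GG_deriv]) (use G1 in simp)
  have dR: "(Rkn k n has_real_derivative
     ((c * (real (k-1) * p^(k - 1 - Suc 0))) * GG N k p - c * p^(k-1) * G') / (GG N k p * GG N k p)) (at p)"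
    by (rule has_field_derivative_transform_within_open[OF dR0, of "{0<..<1}"])
       (use assms in \<open>auto simp: Rkn_eq c_def N_def\<close>)
  have R: "Rkn k n p = c * p^(k-1) / GG N k p" using Rkn_eq[OF assms] unfolding c_def N_def by simp
  have pk: "p * (real (k-1) * p^(k - 1 - Suc 0)) = real (k-1) * p^(k-1)"
    using kpow'[of "k-1" p] by (simp add: mult_ac)
  have H: "p * G' = HH N k p" unfolding G'_def by (rule pG'_eq)
  have pk0: "p^(k-1) > 0" using assms by simp
  have "p * deriv (Rkn k n) p / Rkn k n p =
     p * (((c * (real (k-1) * p^(k - 1 - Suc 0))) * GG N k p - c * p^(k-1) * G') / (GG N k p * GG N k p))
      / (c * p^(k-1) / GG N k p)"
    unfolding DERIV_imp_deriv[OF dR] R ..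
  also have "\<dots> = (p * (c * (real (k-1) * p^(k - 1 - Suc 0))) * GG N k p - c * p^(k-1) * (p * G')) / (c * p^(k-1) * GG N k p)"
    by (rule alg3) (use G1 c0 pk0 assms(3) in auto)
  also have "\<dots> = (c * (p * (real (k-1) * p^(k - 1 - Suc 0))) * GG N k p - c * p^(k-1) * (p * G')) / (c * p^(k-1) * GG N k p)"
    by (simp only: mult_ac)
  also have "\<dots> = real (k-1) - HH N k p / GG N k p"
    unfolding pk H by (rule alg4) (use G1 c0 pk0 assms(3) in auto)
  finally show ?thesis unfolding N_def .
qed

lemma part3:
  assumes "1 \<le> k" "k \<le> n"
  shows "antimono_on {0<..<1::real} (\<lambda>p. p * deriv (Rkn k n) p / Rkn k n p)"
proof (rule monotone_onI)
  fix p q :: real assume p: "p \<in> {0<..<1}" and q: "q \<in> {0<..<1}" and pq: "p \<le> q"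
  define N where "N = n - k"
  define b where "b j = real (N+j choose j)" for j
  define a where "a j = real j * b j" for j
  have ab: "a j * b i \<le> a i * b j" if "i < k" "j < k" "j < i" for i j
  proof -
    have "real j * (b j * b i) \<le> real i * (b j * b i)"
      using that by (intro mult_right_mono) (auto simp: b_def)
    then show ?thesis unfolding a_def by (simp add: mult_ac)
  qed
  have "(\<Sum>i<k. a i * p^i) * (\<Sum>j<k. b j * q^j) \<le> (\<Sum>i<k. a i * q^i) * (\<Sum>j<k. b j * p^j)"
    by (rule tp2[OF ab]) (use p pq in auto)
  then have "HH N k p * GG N k q \<le> HH N k q * GG N k p"
    unfolding HH_def GG_def a_def b_def by simp
  moreover have "GG N k p \<ge> 1" "GG N k q \<ge> 1" using GG_pos p q assms by auto
  ultimately have "HH N k p / GG N k p \<le> HH N k q / GG N k q"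
    by (simp add: divide_simps)
  then show "q * deriv (Rkn k n) q / Rkn k n q \<le> p * deriv (Rkn k n) p / Rkn k n p"
    using part3_formula[of k n p] part3_formula[of k n q] p q assms unfolding N_def by simp
qed

theorem lemma2p4:
  shows "(\<forall>k n l m :: nat. 1 \<le> k \<and> k \<le> n \<and> 1 \<le> l \<and> l \<le> m \<and> l \<le> k \<and> n - k \<le> m - l
            \<longrightarrow> mono_on {0<..<1::real} (\<lambda>p. Rkn k n p / Rkn l m p))
       \<and> (\<forall>k n :: nat. 1 \<le> k \<and> k \<le> n
            \<longrightarrow> antimono_on {0<..<1::real} (\<lambda>p. p * deriv (Rkn k n) p / Rkn k n p))"
  using part2 part3 by blast

end
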